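(* Let $n\ge 2$ be even, let $0 < l_1 < l_2 < \cdots < l_t$ be integers, and let $\tau = (1,2,\dots,l_1)(l_1+1,\dots,l_2)\cdots(l_{t-1}+1,\dots,l_t) \in S_{l_t+3n-3}$. Then for every sequence of integers $1 \le a_1 < a_2 < \cdots < a_{l_t} \le l_t+3n-3$, the permutation $(a_1,\dots,a_{l_1})(a_{l_1+1},\dots,a_{l_2})\cdots(a_{l_{t-1}+1},\dots,a_{l_t})$ can be obtained from $\tau$ by successive conjugation by $n$-crossing permutations over $S_{l_t+3n-3}$; that is, it equals $g\tau g^{-1}$ for some $g$ that is a product of $n$-crossing permutations over $S_{l_t+3n-3}$.
   Context: For integers $2\le n\le m$ and $1 \le j \le m-n+1$, the $n$-crossing permutation $\pi_j\in S_m$ is $\pi_j=(j,\,j+n-1)(j+1,\,j+n-2)\cdots$, i.e. the involution sending $i \mapsto 2j+n-1-i$ for $j\le i\le j+n-1$ and fixing all other elements of $\{1,\dots,m\}$. The $n$-crossing permutations over $S_m$ are $\pi_1,\dots,\pi_{m-n+1}$. *)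

theory Defs
  imports Main
begin

text \<open>Permutations of {1..m} are modelled as functions nat \<Rightarrow> nat fixing everything
outside {1..m}.\<close>
definition crossing :: "nat \<Rightarrow> nat \<Rightarrow> nat \<Rightarrow> nat" where
  "crossing n j i = (if j \<le> i \<and> i \<le> j + n - 1 then 2 * j + n - 1 - i else i)"

text \<open>Block boundaries 0 = l_0 < l_1 < ... < l_t (indices 1..t of l).\<close>
definition cyc_next :: "(nat \<Rightarrow> nat) \<Rightarrow> nat \<Rightarrow> nat \<Rightarrow> nat" where
  "cyc_next l t k =
     (if k \<in> l ` {1..t}
      then (let i = (THE i. i \<in> {1..t} \<and> l i = k) in if i = 1 then 1 else l (i - 1) + 1)
      else Suc k)"

definition cycles_perm :: "(nat \<Rightarrow> nat) \<Rightarrow> nat \<Rightarrow> (nat \<Rightarrow> nat) \<Rightarrow> nat \<Rightarrow> nat" where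
  "cycles_perm l t a x =
     (if \<exists>k\<in>{1..l t}. a k = x
      then a (cyc_next l t (THE k. k \<in> {1..l t} \<and> a k = x))
      else x)"

end

theory Submission
  imports Defs
begin


fun F :: "nat \<Rightarrow> nat list \<Rightarrow> nat \<Rightarrow> nat" where
  "F n [] = id"
| "F n (j # js) = crossing n j \<circ> F n js"

lemma F_eq: "foldr (\<circ>) (map (crossing n) js) id = F n js"
  by (induction js) auto

definition Gs :: "nat \<Rightarrow> nat \<Rightarrow> (nat \<Rightarrow> nat) set" where
  "Gs n M = {F n js | js. \<forall>j\<in>set js. 1 \<le> j \<and> j \<le> M - n + 1}"

definition cyc3 :: "nat \<Rightarrow> nat \<Rightarrow> nat \<Rightarrow> nat \<Rightarrow> nat" where
  "cyc3 x y z = (\<lambda>i. if i = x then y else if i = y then z else if i = z then x else i)"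

lemma crossing_invol: "n \<ge> 1 \<Longrightarrow> crossing n j (crossing n j i) = i"
  unfolding crossing_def by auto

lemma F_app: "F n (xs @ ys) = F n xs \<circ> F n ys"
  by (induction xs) (auto simp: comp_assoc)

lemma G_id: "id \<in> Gs n M"
  unfolding Gs_def by (rule CollectI, rule exI[of _ "[]"]) auto

lemma G_cross: "1 \<le> k \<Longrightarrow> k \<le> M - n + 1 \<Longrightarrow> crossing n k \<in> Gs n M"
  unfolding Gs_def by (rule CollectI, rule exI[of _ "[k]"]) auto

lemma G_comp: "g \<in> Gs n M \<Longrightarrow> h \<in> Gs n M \<Longrightarrow> g \<circ> h \<in> Gs n M"
proof -
  assume "g \<in> Gs n M" "h \<in> Gs n M"
  then obtain xs ys where "g = F n xs" "\<forall>j\<in>set xs. 1 \<le> j \<and> j \<le> M - n + 1"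
     "h = F n ys" "\<forall>j\<in>set ys. 1 \<le> j \<and> j \<le> M - n + 1"
    unfolding Gs_def by auto
  then show ?thesis unfolding Gs_def
    by (intro CollectI exI[of _ "xs @ ys"]) (auto simp: F_app)
qed

lemma F_rev_inv_pt:
  assumes "n \<ge> 1"
  shows "\<forall>x. F n (rev js) (F n js x) = x \<and> F n js (F n (rev js) x) = x"
proof (induction js)
  case Nil
  then show ?case by simp
next
  case (Cons j js)
  have r: "F n (rev (j # js)) = F n (rev js) \<circ> crossing n j"
    by (simp add: F_app)
  show ?case unfolding r using Cons.IH by (simp add: crossing_invol[OF assms])
qed

lemma F_rev_inv:
  assumes "n \<ge> 1"
  shows "F n (rev js) \<circ> F n js = id \<and> F n js \<circ> F n (rev js) = id"
  using F_rev_inv_pt[OF assms, of js] by (auto simp: fun_eq_iff)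

lemma G_inv: "n \<ge> 1 \<Longrightarrow> g \<in> Gs n M \<Longrightarrow> \<exists>h\<in>Gs n M. h \<circ> g = id \<and> g \<circ> h = id"
proof -
  assume n: "n \<ge> 1" and "g \<in> Gs n M"
  then obtain xs where g: "g = F n xs" and xs: "\<forall>j\<in>set xs. 1 \<le> j \<and> j \<le> M - n + 1"
    unfolding Gs_def by auto
  have "F n (rev xs) \<in> Gs n M"
    unfolding Gs_def using xs by (intro CollectI exI[of _ "rev xs"]) auto
  then show ?thesis using F_rev_inv[OF n, of xs] g by blast
qed

lemma cyc3_inj: "inj h \<Longrightarrow> h (cyc3 x y z u) = cyc3 (h x) (h y) (h z) (h u)"
  unfolding cyc3_def by (simp add: inj_eq)

lemma cyc3_conj:
  assumes "h' \<circ> h = id" "h \<circ> h' = id"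
  shows "h \<circ> cyc3 x y z \<circ> h' = cyc3 (h x) (h y) (h z)"
proof
  fix v
  have hh: "h (h' v) = v" using assms(2) by (metis comp_apply id_apply)
  have inj: "inj h" using assms(1) by (metis inj_on_id inj_on_imageI2)
  show "(h \<circ> cyc3 x y z \<circ> h') v = cyc3 (h x) (h y) (h z) v"
    using cyc3_inj[OF inj, of x y z "h' v"] hh by simp
qed

lemma G_conj: "n \<ge> 1 \<Longrightarrow> cyc3 x y z \<in> Gs n M \<Longrightarrow> h \<in> Gs n M \<Longrightarrow> cyc3 (h x) (h y) (h z) \<in> Gs n M"
proof -
  assume n: "n \<ge> 1" and c: "cyc3 x y z \<in> Gs n M" and h: "h \<in> Gs n M"
  obtain h' where h': "h' \<in> Gs n M" "h' \<circ> h = id" "h \<circ> h' = id" using G_inv[OF n h] by blast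
  have "h \<circ> cyc3 x y z \<circ> h' \<in> Gs n M" using G_comp c h h'(1) by blast
  then show ?thesis using cyc3_conj[OF h'(2,3)] by simp
qed

lemma cyc3_rot: "distinct [x,y,z] \<Longrightarrow> cyc3 x y z = cyc3 y z x"
  unfolding cyc3_def by auto

lemma cyc3_sq: "distinct [x,y,z] \<Longrightarrow> cyc3 x z y = cyc3 x y z \<circ> cyc3 x y z"
  unfolding cyc3_def by auto



lemma crossing_range: "1 \<le> k \<Longrightarrow> k + n - 1 \<le> M \<Longrightarrow> n \<ge> 1 \<Longrightarrow> 1 \<le> x \<Longrightarrow> x \<le> M
   \<Longrightarrow> 1 \<le> crossing n k x \<and> crossing n k x \<le> M"
  unfolding crossing_def by auto

lemma F_range: "\<forall>j\<in>set js. 1 \<le> j \<and> j \<le> M - n + 1 \<Longrightarrow> n \<ge> 1 \<Longrightarrow> n \<le> M \<Longrightarrow> 1 \<le> x \<Longrightarrow> x \<le> M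
   \<Longrightarrow> 1 \<le> F n js x \<and> F n js x \<le> M"
proof (induction js)
  case Nil
  then show ?case by simp
next
  case (Cons j js)
  have a: "1 \<le> F n js x \<and> F n js x \<le> M" using Cons by simp
  have b: "1 \<le> j" "j + n - 1 \<le> M" using Cons.prems by auto
  have "1 \<le> crossing n j (F n js x) \<and> crossing n j (F n js x) \<le> M"
    using crossing_range[OF b Cons.prems(2)] a by blast
  then show ?case by simp
qed

lemma G_range: "g \<in> Gs n M \<Longrightarrow> n \<ge> 1 \<Longrightarrow> n \<le> M \<Longrightarrow> 1 \<le> x \<Longrightarrow> x \<le> M \<Longrightarrow> 1 \<le> g x \<and> g x \<le> M"
  unfolding Gs_def using F_range by blast

definition S :: "nat \<Rightarrow> nat \<Rightarrow> nat \<Rightarrow> nat \<Rightarrow> nat \<Rightarrow> bool" where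
  "S n M x y z \<longleftrightarrow> distinct [x,y,z] \<and> cyc3 x y z \<in> Gs n M"

lemma S_rot: "S n M x y z \<Longrightarrow> S n M y z x"
  unfolding S_def using cyc3_rot[of x y z] by auto

lemma S_swap: "S n M x y z \<Longrightarrow> S n M x z y"
proof -
  assume a: "S n M x y z"
  then have d: "distinct [x,y,z]" and c: "cyc3 x y z \<in> Gs n M" unfolding S_def by auto
  have "cyc3 x z y \<in> Gs n M" unfolding cyc3_sq[OF d] by (rule G_comp[OF c c])
  then show ?thesis using d unfolding S_def by auto
qed

lemma S_perms:
  assumes "S n M x y z"
  shows "S n M x z y" "S n M y x z" "S n M y z x" "S n M z x y" "S n M z y x"
proof -
  show 1: "S n M x z y" by (rule S_swap[OF assms])
  show "S n M y z x" by (rule S_rot[OF assms])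
  show "S n M z x y" by (rule S_rot[OF S_rot[OF assms]])
  show "S n M z y x" by (rule S_rot[OF 1])
  show "S n M y x z" by (rule S_rot[OF S_rot[OF 1]])
qed

lemma S_replace:
  assumes n: "n \<ge> 1" and "S n M x y z" "S n M z w u" "w \<noteq> x" "w \<noteq> y" "u \<noteq> x" "u \<noteq> y"
  shows "S n M x y w"
proof -
  have d: "distinct [x,y,z]" "distinct [z,w,u]" using assms unfolding S_def by auto
  have "cyc3 (cyc3 z w u x) (cyc3 z w u y) (cyc3 z w u z) \<in> Gs n M"
    using G_conj[OF n] assms unfolding S_def by blast
  moreover have "cyc3 z w u x = x" "cyc3 z w u y = y" "cyc3 z w u z = w"
    using d assms unfolding cyc3_def by auto
  ultimately show ?thesis using d assms unfolding S_def by auto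
qed

lemma S_cross:
  assumes n: "n \<ge> 1" and "S n M x y z" "1 \<le> k" "k \<le> M - n + 1"
  shows "S n M (crossing n k x) (crossing n k y) (crossing n k z)"
proof -
  have inj: "inj (crossing n k)" by (metis crossing_invol[OF n] injI)
  show ?thesis using G_conj[OF n _ G_cross[OF assms(3,4)]] assms(2) inj
    unfolding S_def by (auto simp: inj_eq)
qed

lemma consec_2: assumes "1 \<le> i" "i + 2 \<le> M" shows "S 2 M i (i+1) (i+2)"
proof -
  have e: "cyc3 i (i+1) (i+2) = crossing 2 i \<circ> crossing 2 (i+1)"
    by (auto simp: fun_eq_iff cyc3_def crossing_def)
  have "crossing 2 i \<in> Gs 2 M" "crossing 2 (i+1) \<in> Gs 2 M"
    using assms by (auto intro!: G_cross)
  then have "cyc3 i (i+1) (i+2) \<in> Gs 2 M" unfolding e by (rule G_comp)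
  then show ?thesis unfolding S_def by simp
qed

lemma base_B1: assumes "n \<ge> 2" "n + 2 \<le> M" shows "S n M 1 n (n+2)"
proof -
  have e: "cyc3 1 n (n+2) = crossing n 1 \<circ> crossing n 2 \<circ> crossing n 3 \<circ> crossing n 2"
    using assms(1) by (auto simp: fun_eq_iff cyc3_def crossing_def)
  have "crossing n 1 \<in> Gs n M" "crossing n 2 \<in> Gs n M" "crossing n 3 \<in> Gs n M"
    using assms by (auto intro!: G_cross)
  then have "cyc3 1 n (n+2) \<in> Gs n M" unfolding e by (intro G_comp)
  then show ?thesis unfolding S_def using assms by simp
qed


lemma consec_one:
  assumes m: "m \<ge> 2" and M: "3*m + 2 \<le> M"
  shows "S (2*m) M 1 2 3"
proof -
  let ?n = "2*m"
  have n1: "?n \<ge> 1" using m by simp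
  have s0: "S ?n M 1 ?n (?n+2)" using base_B1[of ?n M] m M by simp
  have s1: "S ?n M (crossing ?n (m+2) 1) (crossing ?n (m+2) ?n) (crossing ?n (m+2) (?n+2))"
    by (rule S_cross[OF n1 s0]) (use m M in auto)
  have "crossing ?n (m+2) 1 = 1" "crossing ?n (m+2) ?n = 2*m+3" "crossing ?n (m+2) (?n+2) = 2*m+1"
    using m by (auto simp: crossing_def)
  then have s1': "S ?n M 1 (2*m+3) (2*m+1)" using s1 by simp
  have s2: "S ?n M (crossing ?n 2 1) (crossing ?n 2 (2*m+3)) (crossing ?n 2 (2*m+1))"
    by (rule S_cross[OF n1 s1']) (use m M in auto)
  have "crossing ?n 2 1 = 1" "crossing ?n 2 (2*m+3) = 2*m+3" "crossing ?n 2 (2*m+1) = 2"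
    using m by (auto simp: crossing_def)
  then have s2': "S ?n M 1 (2*m+3) 2" using s2 by simp
  have s3: "S ?n M (crossing ?n (m+3) 1) (crossing ?n (m+3) (2*m+3)) (crossing ?n (m+3) 2)"
    by (rule S_cross[OF n1 s2']) (use m M in auto)
  have "crossing ?n (m+3) 1 = 1" "crossing ?n (m+3) (2*m+3) = 2*m+2" "crossing ?n (m+3) 2 = 2"
    using m by (auto simp: crossing_def)
  then have s3': "S ?n M 1 (2*m+2) 2" using s3 by simp
  have s4: "S ?n M (crossing ?n 3 1) (crossing ?n 3 (2*m+2)) (crossing ?n 3 2)"
    by (rule S_cross[OF n1 s3']) (use m M in auto)
  have "crossing ?n 3 1 = 1" "crossing ?n 3 (2*m+2) = 3" "crossing ?n 3 2 = 2"
    using m by (auto simp: crossing_def)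
  then have s4': "S ?n M 1 3 2" using s4 by simp
  show ?thesis using S_perms(1)[OF s4'] .
qed

lemma spread:
  assumes n: "n \<ge> 3" and P: "S n M i (i+1) (i+2)" and k: "1 \<le> k" "k + n - 1 \<le> M" "k \<le> i" "i + 2 \<le> k + n - 1"
  shows "S n M (2*k+n-3-i) (2*k+n-3-i+1) (2*k+n-3-i+2)"
proof -
  have n1: "n \<ge> 1" using n by simp
  have s: "S n M (crossing n k i) (crossing n k (i+1)) (crossing n k (i+2))"
    by (rule S_cross[OF n1 P]) (use k n in auto)
  have "crossing n k i = 2*k+n-3-i+2" "crossing n k (i+1) = 2*k+n-3-i+1" "crossing n k (i+2) = 2*k+n-3-i"
    using k n by (auto simp: crossing_def)
  then have "S n M (2*k+n-3-i+2) (2*k+n-3-i+1) (2*k+n-3-i)" using s by simp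
  then show ?thesis using S_perms(5) by blast
qed

lemma consec_even:
  assumes m: "m \<ge> 2" and M: "6*m - 2 \<le> M" and i: "1 \<le> i" "i + 2 \<le> M"
  shows "S (2*m) M i (i+1) (i+2)"
proof -
  let ?n = "2*m"
  have n3: "?n \<ge> 3" using m by simp
  have P1: "S ?n M 1 2 3" using consec_one[OF m] M m by simp
  have P1': "S ?n M 1 (1+1) (1+2)" using P1 by (simp add: eval_nat_numeral)
  have "S ?n M (2*1+?n-3-1) (2*1+?n-3-1+1) (2*1+?n-3-1+2)"
    by (rule spread[OF n3 P1']) (use m M in auto)
  moreover have "2*1+?n-3-1 = 2*m-2" by simp
  ultimately have P0: "S ?n M (2*m-2) (2*m-2+1) (2*m-2+2)" by simp
  have up: "\<And>d. 2*m-2+d \<le> M-m \<Longrightarrow> S ?n M (2*m-2+d) (2*m-2+d+1) (2*m-2+d+2)"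
  proof -
    fix d show "2*m-2+d \<le> M-m \<Longrightarrow> S ?n M (2*m-2+d) (2*m-2+d+1) (2*m-2+d+2)"
    proof (induction d)
      case 0 then show ?case using P0 by simp
    next
      case (Suc d)
      let ?i = "2*m-2+d"
      have Pi: "S ?n M ?i (?i+1) (?i+2)" using Suc by simp
      have "S ?n M (2*(?i+2-m)+?n-3-?i) (2*(?i+2-m)+?n-3-?i+1) (2*(?i+2-m)+?n-3-?i+2)"
        by (rule spread[OF n3 Pi]) (use Suc.prems m M in auto)
      moreover have "2*(?i+2-m)+?n-3-?i = 2*m-2+Suc d" using m by simp
      ultimately show ?case by simp
    qed
  qed
  have down: "\<And>d. d \<le> m-1 \<Longrightarrow> S ?n M (2*m-2-d) (2*m-2-d+1) (2*m-2-d+2)"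
  proof -
    fix d show "d \<le> m-1 \<Longrightarrow> S ?n M (2*m-2-d) (2*m-2-d+1) (2*m-2-d+2)"
    proof (induction d)
      case 0 then show ?case using P0 by simp
    next
      case (Suc d)
      let ?i = "2*m-2-d"
      have Pi: "S ?n M ?i (?i+1) (?i+2)" using Suc by simp
      have "S ?n M (2*(?i+1-m)+?n-3-?i) (2*(?i+1-m)+?n-3-?i+1) (2*(?i+1-m)+?n-3-?i+2)"
        by (rule spread[OF n3 Pi]) (use Suc.prems m M in auto)
      moreover have "2*(?i+1-m)+?n-3-?i = 2*m-2-Suc d" using m Suc.prems by simp
      ultimately show ?case by simp
    qed
  qed
  have mid: "\<And>j. m - 1 \<le> j \<Longrightarrow> j \<le> M - m \<Longrightarrow> S ?n M j (j+1) (j+2)"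
  proof -
    fix j assume j: "m - 1 \<le> j" "j \<le> M - m"
    show "S ?n M j (j+1) (j+2)"
    proof (cases "j \<le> 2*m-2")
      case True
      have e: "2*m-2-(2*m-2-j) = j" using True by arith
      have "S ?n M (2*m-2-(2*m-2-j)) (2*m-2-(2*m-2-j)+1) (2*m-2-(2*m-2-j)+2)"
        by (rule down) (use True j m in arith)
      then show ?thesis unfolding e .
    next
      case False
      have e: "2*m-2+(j-(2*m-2)) = j" using False by arith
      have "S ?n M (2*m-2+(j-(2*m-2))) (2*m-2+(j-(2*m-2))+1) (2*m-2+(j-(2*m-2))+2)"
        by (rule up) (use False j m in arith)
      then show ?thesis unfolding e .
    qed
  qed
  show ?thesis
  proof (cases "i < m - 1")
    case True
    let ?s = "2*m-1-i"
    have Ps: "S ?n M ?s (?s+1) (?s+2)" using mid[of ?s] True m M i by simp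
    have "S ?n M (2*1+?n-3-?s) (2*1+?n-3-?s+1) (2*1+?n-3-?s+2)"
      by (rule spread[OF n3 Ps]) (use True m M i in auto)
    moreover have "2*1+?n-3-?s = i" using True m i by simp
    ultimately show ?thesis by simp
  next
    case False
    show ?thesis
    proof (cases "i \<le> M - m")
      case True
      then show ?thesis using mid False by simp
    next
      case c2: False
      let ?s = "2*M-2*m-1-i"
      let ?k = "M-2*m+1"
      have Ps: "S ?n M ?s (?s+1) (?s+2)" using mid[of ?s] c2 m M i by simp
      have "S ?n M (2*?k+?n-3-?s) (2*?k+?n-3-?s+1) (2*?k+?n-3-?s+2)"
        by (rule spread[OF n3 Ps]) (use c2 m M i in auto)
      moreover have "2*?k+?n-3-?s = i" using c2 m M i by simp
      ultimately show ?thesis by simp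
    qed
  qed
qed


lemma consec:
  assumes n2: "n \<ge> 2" and ev: "even n" and M: "3*n - 2 \<le> M" and i: "1 \<le> i" "j = i + 1" "k = i + 2" "k \<le> M"
  shows "S n M i j k"
proof -
  obtain m where m: "n = 2*m" using ev by blast
  show ?thesis
  proof (cases "m = 1")
    case True
    then show ?thesis using consec_2[of i M] m i by simp
  next
    case False
    then have "m \<ge> 2" using m n2 by simp
    then show ?thesis using consec_even[of m M i] m i M by simp
  qed
qed

context
  fixes n M :: nat
  assumes n2: "n \<ge> 2" and ev: "even n" and M: "3*n - 2 \<le> M" and M5: "5 \<le> M"
begin

lemma n1: "n \<ge> 1" using n2 by simp

lemma C: "1 \<le> i \<Longrightarrow> j = i + 1 \<Longrightarrow> k = i + 2 \<Longrightarrow> k \<le> M \<Longrightarrow> S n M i j k"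
  using consec[OF n2 ev M] by blast

lemma type1a: "1 \<le> i \<Longrightarrow> i + 4 \<le> M \<Longrightarrow> S n M i (i+1) (i+3)"
proof -
  assume i: "1 \<le> i" "i + 4 \<le> M"
  have a: "S n M i (i+1) (i+2)" by (rule C) (use i in auto)
  have b: "S n M (i+2) (i+3) (i+4)" by (rule C) (use i in auto)
  show ?thesis by (rule S_replace[OF n1 a b]) auto
qed

lemma type1: "1 \<le> i \<Longrightarrow> j = i + 1 \<Longrightarrow> k = i + 3 \<Longrightarrow> k \<le> M \<Longrightarrow> S n M i j k"
proof -
  assume i: "1 \<le> i" "j = i + 1" "k = i + 3" "k \<le> M"
  show ?thesis
  proof (cases "i + 4 \<le> M")
    case True
    then show ?thesis using type1a i by simp
  next
    case False
    then have i2: "i \<ge> 2" using i M5 by simp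
    have t: "S n M (i-1) (i-1+1) (i-1+3)" by (rule type1a) (use i i2 False in auto)
    have e1: "i-1+1 = i" "i-1+3 = i+2" using i2 by auto
    have t': "S n M (i+2) i (i-1)" using S_perms(5)[OF t] unfolding e1 .
    have c: "S n M (i+1) (i+2) (i+3)" by (rule C) (use i in auto)
    have c': "S n M (i+3) (i+1) (i+2)" using S_perms(4)[OF c] .
    have r: "S n M (i+3) (i+1) i" by (rule S_replace[OF n1 c' t']) (use i2 in auto)
    show ?thesis using S_perms(5)[OF r] i by simp
  qed
qed

lemma type2a: "2 \<le> i \<Longrightarrow> i + 3 \<le> M \<Longrightarrow> S n M i (i+2) (i+3)"
proof -
  assume i: "2 \<le> i" "i + 3 \<le> M"
  have c: "S n M (i+1) (i+2) (i+3)" by (rule C) (use i in auto)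
  have c': "S n M (i+2) (i+3) (i+1)" using S_perms(3)[OF c] .
  have d: "S n M (i-1) i (i+1)" by (rule C) (use i in auto)
  have d': "S n M (i+1) i (i-1)" using S_perms(5)[OF d] .
  have r: "S n M (i+2) (i+3) i" by (rule S_replace[OF n1 c' d']) (use i in auto)
  show ?thesis using S_perms(4)[OF r] .
qed

lemma type2: "1 \<le> i \<Longrightarrow> j = i + 2 \<Longrightarrow> k = i + 3 \<Longrightarrow> k \<le> M \<Longrightarrow> S n M i j k"
proof -
  assume i: "1 \<le> i" "j = i + 2" "k = i + 3" "k \<le> M"
  show ?thesis
  proof (cases "i \<ge> 2")
    case True
    then show ?thesis using type2a i by simp
  next
    case False
    then have i1: "i = 1" using i by simp
    have c: "S n M 1 2 3" by (rule C) (use M5 in auto)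
    have c': "S n M 1 3 2" using S_perms(1)[OF c] .
    have d: "S n M 2 4 5" using type2a[of 2] M5 by simp
    have r: "S n M 1 3 4" by (rule S_replace[OF n1 c' d]) auto
    have e: "i = 1" "j = 3" "k = 4" using i i1 by auto
    show ?thesis unfolding e by (rule r)
  qed
qed

lemma all3_sorted: "1 \<le> a \<Longrightarrow> a < b \<Longrightarrow> b < c \<Longrightarrow> c \<le> M \<Longrightarrow> S n M a b c"
proof (induction "b + c" arbitrary: b c rule: less_induct)
  case less
  show ?case
  proof (cases "c \<le> a + 3")
    case True
    consider "b = a+1" "c = a+2" | "b = a+1" "c = a+3" | "b = a+2" "c = a+3"
      using True less.prems by arith
    then show ?thesis
    proof cases
      case 1 then show ?thesis by (intro C) (use less.prems in auto)
    next
      case 2 then show ?thesis by (intro type1) (use less.prems in auto)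
    next
      case 3 then show ?thesis by (intro type2) (use less.prems in auto)
    qed
  next
    case False
    show ?thesis
    proof (cases "b < c - 1")
      case True
      have ih: "S n M a b (c-1)" by (rule less.hyps) (use less.prems True in auto)
      show ?thesis
      proof (cases "b = c - 2")
        case False
        have t: "S n M (c-2) (c-1) c" by (rule C) (use less.prems \<open>\<not> c \<le> a + 3\<close> in auto)
        have t': "S n M (c-1) c (c-2)" using S_perms(3)[OF t] .
        show ?thesis by (rule S_replace[OF n1 ih t']) (use less.prems False \<open>\<not> c \<le> a + 3\<close> in auto)
      next
        case True
        have t: "S n M (c-3) (c-1) c" by (rule type2) (use less.prems \<open>\<not> c \<le> a + 3\<close> in auto)
        have t': "S n M (c-1) c (c-3)" using S_perms(3)[OF t] .
        show ?thesis by (rule S_replace[OF n1 ih t']) (use less.prems True \<open>\<not> c \<le> a + 3\<close> in auto)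
      qed
    next
      case False
      then have bc: "b = c - 1" using less.prems by simp
      have ih: "S n M a (b-1) c" by (rule less.hyps) (use less.prems bc \<open>\<not> c \<le> a + 3\<close> in auto)
      have ih': "S n M a c (b-1)" using S_perms(1)[OF ih] .
      have t: "S n M (b-2) (b-1) b" by (rule C) (use less.prems bc \<open>\<not> c \<le> a + 3\<close> in auto)
      have t': "S n M (b-1) b (b-2)" using S_perms(3)[OF t] .
      have r: "S n M a c b" by (rule S_replace[OF n1 ih' t']) (use less.prems bc \<open>\<not> c \<le> a + 3\<close> in auto)
      show ?thesis using S_perms(1)[OF r] .
    qed
  qed
qed

lemma all3: "distinct [x,y,z] \<Longrightarrow> 1 \<le> x \<Longrightarrow> 1 \<le> y \<Longrightarrow> 1 \<le> z \<Longrightarrow> x \<le> M \<Longrightarrow> y \<le> M \<Longrightarrow> z \<le> M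
  \<Longrightarrow> cyc3 x y z \<in> Gs n M"
proof -
  assume d: "distinct [x,y,z]" and r: "1 \<le> x" "1 \<le> y" "1 \<le> z" "x \<le> M" "y \<le> M" "z \<le> M"
  have "S n M x y z"
  proof -
    consider "x < y" "y < z" | "x < z" "z < y" | "y < x" "x < z" | "y < z" "z < x" | "z < x" "x < y" | "z < y" "y < x"
      using d by (simp, arith)
    then show ?thesis
    proof cases
      case 1 then show ?thesis using all3_sorted r by simp
    next
      case 2 then show ?thesis using all3_sorted[of x z y] S_perms(1) r by blast
    next
      case 3 then show ?thesis using all3_sorted[of y x z] S_perms(2) r by blast
    next
      case 4 then show ?thesis using all3_sorted[of y z x] S_perms(4) r by blast
    next
      case 5 then show ?thesis using all3_sorted[of z x y] S_perms(3) r by blast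
    next
      case 6 then show ?thesis using all3_sorted[of z y x] S_perms(5) r by blast
    qed
  qed
  then show ?thesis unfolding S_def by simp
qed

end



lemma mono_from_step:
  assumes "\<forall>i\<in>{1..<N}. f i < f (Suc i)"
  shows "1 \<le> i \<Longrightarrow> i < j \<Longrightarrow> j \<le> N \<Longrightarrow> (f i :: nat) < f j"
proof (induction j)
  case 0 then show ?case by simp
next
  case (Suc j)
  show ?case
  proof (cases "i = j")
    case True
    then show ?thesis using assms Suc.prems by auto
  next
    case False
    then have "f i < f j" using Suc by simp
    moreover have "f j < f (Suc j)" using assms Suc.prems False by auto
    ultimately show ?thesis by simp
  qed
qed

lemma construct:
  assumes n2: "n \<ge> 2" and ev: "even n" and M: "3*n - 2 \<le> M" and M5: "5 \<le> M"
    and mono: "\<And>i j. 1 \<le> i \<Longrightarrow> i < j \<Longrightarrow> j \<le> L \<Longrightarrow> (a i :: nat) < a j"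
    and a1: "1 \<le> a 1" and aL: "a L \<le> M" and LM: "L + 3 \<le> M"
  shows "L' \<le> L \<Longrightarrow> \<exists>g\<in>Gs n M. \<forall>k\<in>{1..L'}. g k = a k"
proof (induction L')
  case 0
  then show ?case using G_id by auto
next
  case (Suc L')
  then obtain g where g: "g \<in> Gs n M" "\<forall>k\<in>{1..L'}. g k = a k" by auto
  have n1: "n \<ge> 1" "n \<le> M" using n2 M by auto
  obtain g' where g': "g' \<circ> g = id" using G_inv[OF n1(1) g(1)] by blast
  have injg: "\<And>u v. g u = g v \<Longrightarrow> u = v" by (metis g' comp_apply id_apply)
  let ?y = "g (Suc L')" and ?w = "a (Suc L')"
  have yr: "1 \<le> ?y \<and> ?y \<le> M" by (rule G_range[OF g(1) n1]) (use Suc.prems LM in auto)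
  have w1: "1 \<le> ?w"
  proof (cases "L' = 0")
    case True then show ?thesis using a1 by simp
  next
    case False then show ?thesis using mono[of 1 "Suc L'"] a1 Suc.prems by simp
  qed
  have wM: "?w \<le> M"
  proof (cases "Suc L' = L")
    case True then show ?thesis using aL by simp
  next
    case False then show ?thesis using mono[of "Suc L'" L] aL Suc.prems by simp
  qed
  show ?case
  proof (cases "?y = ?w")
    case True
    then show ?thesis using g by (intro bexI[of _ g]) (auto simp: le_Suc_eq)
  next
    case False
    let ?B = "a ` {1..L'} \<union> {?y, ?w}"
    have "card ?B \<le> card (a ` {1..L'}) + card {?y, ?w}" by (rule card_Un_le)
    also have "\<dots> \<le> L' + 2"
    proof -
      have "card {?y, ?w} = 2" using False by simp
      moreover have "card (a ` {1..L'}) \<le> L'" using card_image_le[of "{1..L'}" a] by simp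
      ultimately show ?thesis by simp
    qed
    finally have cB: "card ?B < card {1..M}" using Suc.prems LM by simp
    have "\<not> {1..M} \<subseteq> ?B"
    proof
      assume "{1..M} \<subseteq> ?B"
      then have "card {1..M} \<le> card ?B" by (intro card_mono) auto
      then show False using cB by simp
    qed
    then obtain z where z: "z \<in> {1..M}" "z \<notin> ?B" by blast
    have d: "distinct [?y, ?w, z]" using False z by auto
    have hG: "cyc3 ?y ?w z \<in> Gs n M"
      by (rule all3[OF n2 ev M M5 d]) (use yr w1 wM z in auto)
    show ?thesis
    proof (intro bexI[of _ "cyc3 ?y ?w z \<circ> g"] ballI)
      show "cyc3 ?y ?w z \<circ> g \<in> Gs n M" by (rule G_comp[OF hG g(1)])
    next
      fix k assume k: "k \<in> {1..Suc L'}"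
      show "(cyc3 ?y ?w z \<circ> g) k = a k"
      proof (cases "k = Suc L'")
        case True
        then show ?thesis by (simp add: cyc3_def)
      next
        case False
        then have k': "k \<in> {1..L'}" using k by auto
        have gk: "g k = a k" using g(2) k' by blast
        have "a k \<noteq> ?y" using injg[of k "Suc L'"] gk k' by auto
        moreover have "a k \<noteq> ?w" using mono[of k "Suc L'"] k' Suc.prems by auto
        moreover have "a k \<noteq> z" using z k' by auto
        ultimately show ?thesis using gk by (simp add: cyc3_def)
      qed
    qed
  qed
qed



lemma cyc_next_range:
  assumes t: "t \<ge> 1" and lm: "\<And>i j. 1 \<le> i \<Longrightarrow> i < j \<Longrightarrow> j \<le> t \<Longrightarrow> (l i :: nat) < l j"
    and k: "1 \<le> k" "k \<le> l t"
  shows "1 \<le> cyc_next l t k \<and> cyc_next l t k \<le> l t"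
proof (cases "k \<in> l ` {1..t}")
  case kin: True
  then obtain i0 where i0: "i0 \<in> {1..t}" "l i0 = k" by auto
  have the: "(THE i. i \<in> {1..t} \<and> l i = k) = i0"
  proof (rule the_equality)
    show "i0 \<in> {1..t} \<and> l i0 = k" using i0 by simp
  next
    fix i assume i: "i \<in> {1..t} \<and> l i = k"
    show "i = i0"
    proof (rule ccontr)
      assume "i \<noteq> i0"
      then consider "i < i0" | "i0 < i" by linarith
      then show False
        by cases (use lm[of i i0] lm[of i0 i] i i0 in auto)
    qed
  qed
  show ?thesis
  proof (cases "i0 = 1")
    case True
    then show ?thesis using the i0 k kin unfolding cyc_next_def by (simp add: Let_def)
  next
    case False
    have ii: "1 \<le> i0 - 1" "i0 - 1 < i0" "i0 \<le> t" using i0 False by auto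
    have "l (i0 - 1) < l i0" by (rule lm[OF ii])
    moreover have "l i0 \<le> l t"
    proof (cases "i0 = t")
      case True then show ?thesis by simp
    next
      case False then show ?thesis using lm[of i0 t] i0 by simp
    qed
    ultimately show ?thesis using the i0 False kin unfolding cyc_next_def by (simp add: Let_def)
  qed
next
  case False
  have "t \<in> {1..t}" using t by simp
  then have "k \<noteq> l t" using False by auto
  then show ?thesis using False k unfolding cyc_next_def by simp
qed

lemma cp_in:
  assumes inj: "inj_on f {1..l t}" and k: "k \<in> {1..l t}"
  shows "cycles_perm l t f (f k) = f (cyc_next l t k)"
proof -
  have "(THE k'. k' \<in> {1..l t} \<and> f k' = f k) = k"
    by (rule the_equality) (use inj k in \<open>auto dest: inj_onD\<close>)
  then show ?thesis using k unfolding cycles_perm_def by auto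
qed

lemma cp_out:
  assumes "x \<notin> f ` {1..l t}"
  shows "cycles_perm l t f x = x"
  using assms unfolding cycles_perm_def by auto

lemma assemble:
  assumes hg: "h \<circ> g = id" and gh: "g \<circ> h = id" and ga: "\<forall>k\<in>{1..l t}. g k = a k"
    and inja: "inj_on a {1..l t}"
    and cn: "\<And>k. k \<in> {1..l t} \<Longrightarrow> cyc_next l t k \<in> {1..l t}"
  shows "cycles_perm l t a = g \<circ> cycles_perm l t id \<circ> inv g"
proof
  fix x
  have invg: "inv g = h" by (rule inv_unique_comp[OF gh hg])
  have ghx: "g (h x) = x" using gh by (metis comp_apply id_apply)
  have hgx: "\<And>u. h (g u) = u" using hg by (metis comp_apply id_apply)
  show "cycles_perm l t a x = (g \<circ> cycles_perm l t id \<circ> inv g) x"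
  proof (cases "x \<in> a ` {1..l t}")
    case True
    then obtain k where k: "k \<in> {1..l t}" "x = a k" by auto
    have hx: "h x = k" using hgx[of k] ga k by simp
    have "cycles_perm l t id k = cyc_next l t k"
      using cp_in[of id l t k] k by simp
    moreover have "g (cyc_next l t k) = a (cyc_next l t k)" using ga cn[OF k(1)] by blast
    moreover have "cycles_perm l t a x = a (cyc_next l t k)" using cp_in[of a l t k, OF inja k(1)] k by simp
    ultimately show ?thesis using invg hx by simp
  next
    case False
    have "h x \<notin> {1..l t}"
    proof
      assume "h x \<in> {1..l t}"
      then have "g (h x) = a (h x)" using ga by blast
      then show False using False ghx \<open>h x \<in> {1..l t}\<close> by (metis image_eqI)
    qed
    then have "cycles_perm l t id (h x) = h x" using cp_out[of "h x" id l t] by simp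
    then show ?thesis using cp_out[of x a l t, OF False] invg ghx by simp
  qed
qed

theorem lemma2p5:
  fixes n t :: nat and l a :: "nat \<Rightarrow> nat"
  assumes "n \<ge> 2" and "even n" and "t \<ge> 1"
    and "0 < l 1" and "\<forall>i\<in>{1..<t}. l i < l (Suc i)"
    and "1 \<le> a 1" and "\<forall>k\<in>{1..<l t}. a k < a (Suc k)"
    and "a (l t) \<le> l t + 3 * n - 3"
  shows "\<exists>js. (\<forall>j\<in>set js. 1 \<le> j \<and> j \<le> (l t + 3 * n - 3) - n + 1) \<and>
           (let g = foldr (\<circ>) (map (crossing n) js) id
            in cycles_perm l t a = g \<circ> cycles_perm l t id \<circ> inv g)"
proof -
  note n2 = assms(1) and ev = assms(2) and t1 = assms(3)
  define L where "L = l t"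
  define M where "M = L + 3 * n - 3"
  have lm: "\<And>i j. 1 \<le> i \<Longrightarrow> i < j \<Longrightarrow> j \<le> t \<Longrightarrow> l i < l j"
    using mono_from_step[OF assms(5)] by blast
  have am: "\<And>i j. 1 \<le> i \<Longrightarrow> i < j \<Longrightarrow> j \<le> L \<Longrightarrow> a i < a j"
    using mono_from_step[OF assms(7)] unfolding L_def by blast
  have L1: "L \<ge> 1"
  proof (cases "t = 1")
    case True then show ?thesis using assms(4) L_def by simp
  next
    case False then show ?thesis using lm[of 1 t] t1 assms(4) L_def by simp
  qed
  have inja: "inj_on a {1..L}"
  proof (rule inj_onI)
    fix u v assume "u \<in> {1..L}" "v \<in> {1..L}" "a u = a v"
    then show "u = v" using am[of u v] am[of v u] by (cases u v rule: linorder_cases) auto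
  qed
  have cn: "\<And>k. k \<in> {1..l t} \<Longrightarrow> cyc_next l t k \<in> {1..l t}"
    using cyc_next_range[of t l, OF t1 lm] by auto
  show ?thesis
  proof (cases "L = 1")
    case True
    have cn1: "cyc_next l t 1 = 1" using cn[of 1] True L_def by simp
    have idp: "\<And>f. cycles_perm l t f = id"
    proof
      fix f x
      show "cycles_perm l t f x = id x"
      proof (cases "x \<in> f ` {1..l t}")
        case True
        then have "x = f 1" using \<open>L = 1\<close> L_def by auto
        moreover have "inj_on f {1..l t}" using \<open>L = 1\<close> L_def by simp
        ultimately show ?thesis using cp_in[of f l t 1] cn1 \<open>L = 1\<close> L_def by simp
      next
        case False then show ?thesis using cp_out by simp
      qed
    qed
    show ?thesis by (intro exI[of _ "[]"]) (simp add: idp)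
  next
    case False
    then have L2: "L \<ge> 2" using L1 by simp
    have M: "3*n - 2 \<le> M" "5 \<le> M" "L + 3 \<le> M" using L2 n2 M_def by auto
    have aL: "a L \<le> M" using assms(8) L_def M_def by simp
    obtain g where g: "g \<in> Gs n M" "\<forall>k\<in>{1..L}. g k = a k"
      using construct[OF n2 ev M(1,2) am assms(6) aL M(3), of L] by blast
    obtain js where js: "g = F n js" "\<forall>j\<in>set js. 1 \<le> j \<and> j \<le> M - n + 1"
      using g(1) unfolding Gs_def by blast
    obtain h where h: "h \<circ> g = id" "g \<circ> h = id" using G_inv[of n g M] g(1) n2 by auto
    have eq: "cycles_perm l t a = g \<circ> cycles_perm l t id \<circ> inv g"
      by (rule assemble[OF h]) (use g(2) inja cn L_def in auto)
    show ?thesis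
      by (intro exI[of _ js]) (use js eq M_def L_def in \<open>simp add: F_eq Let_def\<close>)
  qed
qed


end
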